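(* Let $M$ be a rational $\mathbb G_a$-module over $k$ of degree $<p^r$. Then for any finite sequence $\underline a=(a_0,a_1,\dots)$ in $k$, with $\underline b=(b_0,\dots,b_{r-1}):=(a_{r-1},\dots,a_0)$, the action of $\sum_{s\ge0}a_s^{p^s}u_s$ on $M$ equals the action of $\sum_{i=0}^{r-1}b_{r-1-i}^{p^i}u_i$ on $M$; the latter element of $k\mathbb G_{a(r)}=k[u_0,\dots,u_{r-1}]/(u_i^p)$ is the sum of the terms linear in the $u_i$ of $(\sigma_{\underline b}\circ i_r)_*(u_{r-1})$. In other words, the action of $\mathbb G_a$ on $M$ at $\sigma_{\underline a}$ equals the linearization of the action of $\mathbb G_{a(r)}$ on $M$ at $\sigma_{\underline b}\circ i_r$.
   Context: $k$ is an algebraically closed field of characteristic $p>0$. $\mathbb G_a$ is the additive group, $k[\mathbb G_a]=k[T]$; $\mathbb G_{a(r)}$ its $r$-th Frobenius kernel, $k[\mathbb G_{a(r)}]=k[T]/(T^{p^r})$, inclusion $i_r$. $k\mathbb G_a=k[u_0,u_1,\dots]/(u_i^p)$ with $u_i$ the functional reading off the coefficient of $T^{p^i}$; $k\mathbb G_{a(r)}=k[u_0,\dots,u_{r-1}]/(u_i^p)$; a homomorphism $\psi$ induces $\psi_*$ on group algebras. A rational $\mathbb G_a$-module is a comodule $\Delta_M:M\to M\otimes k[T]$, a $k\mathbb G_a$-module via $\phi\cdot m=\sum\phi(f_i)m_i$ when $\Delta_M(m)=\sum m_i\otimes f_i$; degree $<p^r$ means $\Delta_M(M)\subset M\otimes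 k[T]_{<p^r}$. For a finite sequence $\underline a$, $\sigma_{\underline a}:\mathbb G_a\to\mathbb G_a$ is $T\mapsto\sum_sa_sT^{p^s}$. The action of $\mathbb G_a$ on $M$ at $\sigma_{\underline a}$ is that of $\sum_sa_s^{p^s}u_s$; the action of $\mathbb G_{a(r)}$ on $M$ at $\mu:\mathbb G_{a(r)}\to\mathbb G_a$ is that of $\mu_*(u_{r-1})$. *)

theory Defs
  imports "HOL-Computational_Algebra.Polynomial"
begin

text \<open>A rational G_a-module M with comodule map Delta_M : M -> M (x) k[T] is encoded
  by the coefficient maps D n : M -> M, where Delta_M(m) = sum_n (D n m) (x) T^n.
  The comodule axioms read: each D n is k-linear, each m has finitely many nonzero
  D n m, counit: D 0 = id, coassociativity (with Delta(T) = T(x)1 + 1(x)T):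
  D i (D j m) = (i+j choose i) D (i+j) m.\<close>

definition Ga_module :: "('k::field \<Rightarrow> 'm::ab_group_add \<Rightarrow> 'm) \<Rightarrow> (nat \<Rightarrow> 'm \<Rightarrow> 'm) \<Rightarrow> bool" where
  "Ga_module scale D \<longleftrightarrow>
     vector_space scale \<and>
     (\<forall>n. Vector_Spaces.linear scale scale (D n)) \<and>
     (\<forall>m. finite {n. D n m \<noteq> 0}) \<and>
     (\<forall>m. D 0 m = m) \<and>
     (\<forall>i j m. D i (D j m) = scale (of_nat ((i + j) choose i)) (D (i + j) m))"

definition degree_less :: "(nat \<Rightarrow> 'm::zero \<Rightarrow> 'm) \<Rightarrow> nat \<Rightarrow> bool" where
  "degree_less D N \<longleftrightarrow> (\<forall>n m. N \<le> n \<longrightarrow> D n m = 0)"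

text \<open>An element phi of kG_a (a linear functional on k[T]) is encoded by its values
  on the monomial basis: phi n = phi(T^n).  Elements of kG_{a(r)} are those functionals
  vanishing on T^n for n >= p^r (functionals on k[T]/(T^{p^r})).\<close>

definition act :: "('k::field \<Rightarrow> 'm::ab_group_add \<Rightarrow> 'm) \<Rightarrow> (nat \<Rightarrow> 'm \<Rightarrow> 'm) \<Rightarrow> (nat \<Rightarrow> 'k) \<Rightarrow> 'm \<Rightarrow> 'm" where
  "act scale D \<phi> m = (\<Sum>n\<in>{n. D n m \<noteq> 0}. scale (\<phi> n) (D n m))"

definition u :: "nat \<Rightarrow> nat \<Rightarrow> nat \<Rightarrow> 'k::field" where
  "u p i n = (if n = p ^ i then 1 else 0)"

text \<open>Multiplication of kG_a, dual to the comultiplication T |-> T(x)1 + 1(x)T.\<close>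
definition conv :: "(nat \<Rightarrow> 'k::field) \<Rightarrow> (nat \<Rightarrow> 'k) \<Rightarrow> nat \<Rightarrow> 'k" where
  "conv \<phi> \<psi> n = (\<Sum>j\<le>n. of_nat (n choose j) * \<phi> j * \<psi> (n - j))"

text \<open>Unit of kG_a: the counit (evaluation at 0).\<close>
definition gunit :: "nat \<Rightarrow> 'k::field" where
  "gunit n = (if n = 0 then 1 else 0)"

fun gpow :: "(nat \<Rightarrow> 'k::field) \<Rightarrow> nat \<Rightarrow> nat \<Rightarrow> 'k" where
  "gpow \<phi> 0 = gunit"
| "gpow \<phi> (Suc j) = conv \<phi> (gpow \<phi> j)"

fun umon :: "nat \<Rightarrow> nat \<Rightarrow> (nat \<Rightarrow> nat) \<Rightarrow> nat \<Rightarrow> 'k::field" where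
  "umon p 0 e = gunit"
| "umon p (Suc r) e = conv (umon p r e) (gpow (u p r) (e r))"

definition exps :: "nat \<Rightarrow> nat \<Rightarrow> (nat \<Rightarrow> nat) set" where
  "exps p r = {e. (\<forall>i<r. e i < p) \<and> (\<forall>i\<ge>r. e i = 0)}"

definition unitvec :: "nat \<Rightarrow> nat \<Rightarrow> nat" where
  "unitvec i = (\<lambda>j. if j = i then 1 else 0)"

text \<open>The sum of the terms linear in the u_i of an element of
  kG_{a(r)} = k[u_0,...,u_{r-1}]/(u_i^p), computed from its (unique) expansion in the
  monomial basis.\<close>
definition linear_part :: "nat \<Rightarrow> nat \<Rightarrow> (nat \<Rightarrow> 'k::field) \<Rightarrow> nat \<Rightarrow> 'k" where
  "linear_part p r \<phi> =
     (let c = (THE c. (\<forall>e. e \<notin> exps p r \<longrightarrow> c e = 0) \<and>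
                      (\<forall>n. \<phi> n = (\<Sum>e\<in>exps p r. c e * umon p r e n)))
      in (\<lambda>n. \<Sum>i<r. c (unitvec i) * u p i n))"

definition seq_nth :: "'k::zero list \<Rightarrow> nat \<Rightarrow> 'k" where
  "seq_nth xs s = (if s < length xs then xs ! s else 0)"

definition sigma :: "nat \<Rightarrow> 'k::field list \<Rightarrow> 'k poly" where
  "sigma p a = (\<Sum>s<length a. monom (a ! s) (p ^ s))"

text \<open>For mu = sigma_b o i_r : G_{a(r)} -> G_a, with comorphism
  k[T] -> k[T]/(T^{p^r}), f |-> f(sigma_b(T)) mod T^{p^r}, the induced map
  mu_* : kG_{a(r)} -> kG_a, psi |-> psi o mu^*.\<close>
definition push_r :: "nat \<Rightarrow> nat \<Rightarrow> 'k::field poly \<Rightarrow> (nat \<Rightarrow> 'k) \<Rightarrow> nat \<Rightarrow> 'k" where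
  "push_r p r q \<psi> N = (\<Sum>n<p ^ r. \<psi> n * coeff (pcompose (monom 1 N) q) n)"

definition ulin :: "nat \<Rightarrow> nat \<Rightarrow> (nat \<Rightarrow> 'k::field) \<Rightarrow> nat \<Rightarrow> 'k" where
  "ulin p L c n = (\<Sum>s<L. c s * u p s n)"

end

theory Submission
  imports Defs "HOL-Computational_Algebra.Primes"
begin

lemma pow_onex:
  fixes P :: nat
  assumes "prime CHAR('k::field)" "P = CHAR('k) ^ i"
  shows "([:1,1:] :: 'k poly) ^ P = 1 + monom 1 P"
proof -
  have e: "([:1,1:] :: 'k poly) = 1 + monom 1 1"
    by (simp add: poly_eq_iff coeff_monom coeff_pCons split: nat.split)
  have "(1 + monom 1 1 :: 'k poly) ^ P = 1 ^ P + (monom 1 1) ^ P"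
    by (rule freshmans_dream') (use assms in auto)
  thus ?thesis by (simp add: e monom_power)
qed

lemma coeff_G:
  fixes P :: nat assumes "0 < P"
  shows "coeff ((1 + monom 1 P :: 'k::field poly) ^ b) k =
     (if P dvd k then of_nat (b choose (k div P)) else 0)"
proof (induction b arbitrary: k)
  case 0
  then show ?case using assms
  proof (cases "k = 0")
    case False
    show ?thesis
    proof (cases "P dvd k")
      case True
      then have "k div P \<noteq> 0" using False assms by (auto elim!: dvdE)
      thus ?thesis using False True by (simp add: coeff_1 binomial_eq_0)
    qed (simp add: coeff_1 False)
  qed simp
next
  case (Suc b)
  have "(1 + monom 1 P :: 'k poly) ^ Suc b = (1 + monom 1 P) ^ b + monom 1 P * (1 + monom 1 P) ^ b"
    by (simp add: algebra_simps)
  hence "coeff ((1 + monom 1 P :: 'k poly) ^ Suc b) k = coeff ((1 + monom 1 P) ^ b) k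
      + (if k < P then 0 else coeff ((1 + monom 1 P) ^ b) (k - P))"
    by (simp add: coeff_monom_mult)
  also have "\<dots> = (if P dvd k then of_nat (Suc b choose (k div P)) else 0)"
  proof (cases "P dvd k")
    case True
    then obtain j where k: "k = P * j" by blast
    show ?thesis
    proof (cases j)
      case 0 thus ?thesis using k assms Suc by simp
    next
      case (Suc j')
      have "k - P = P * j'" using k Suc by (simp add: algebra_simps)
      thus ?thesis using k Suc \<open>0<P\<close> Suc.IH by (simp add: algebra_simps)
    qed
  next
    case False
    have "\<not> P dvd (k - P)" if "\<not> k < P" using False that
      by (metis dvd_minus_add dvd_refl le_add_diff_inverse2 not_less dvd_add)
    thus ?thesis using False Suc.IH by auto
  qed
  finally show ?case .
qed

lemma binom1:
  assumes "prime CHAR('k::field)" "P = CHAR('k) ^ i"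
  shows "(of_nat ((m * P) choose P) :: 'k) = of_nat m"
proof -
  have P0: "0 < P" using assms prime_gt_0_nat by simp
  show ?thesis
  proof (cases "m = 0")
    case True thus ?thesis using P0 by (simp add: binomial_eq_0)
  next
    case False
    have "(of_nat ((m * P) choose P) :: 'k) = coeff ([:1,1:] ^ (P * m)) P"
      using coeff_linear_poly_power[of P "P*m" "1::'k" 1] False by (simp add: mult.commute)
    also have "([:1,1:] :: 'k poly) ^ (P * m) = (1 + monom 1 P) ^ m"
      by (simp add: power_mult pow_onex[OF assms])
    also have "coeff ((1 + monom 1 P :: 'k poly) ^ m) P = of_nat m"
      using P0 by (simp add: coeff_G[OF P0])
    finally show ?thesis .
  qed
qed

lemma binom2:
  assumes "prime CHAR('k::field)" "P = CHAR('k) ^ i" "a < P"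
  shows "(of_nat ((a + b * P) choose a) :: 'k) = 1"
proof -
  have P0: "0 < P" using assms prime_gt_0_nat by simp
  have "(of_nat ((a + b * P) choose a) :: 'k) = coeff ([:1,1:] ^ (a + P * b)) a"
    using coeff_linear_poly_power[of a "a + P*b" "1::'k" 1] by (simp add: mult.commute)
  also have "([:1,1:] :: 'k poly) ^ (a + P * b) = [:1,1:] ^ a * (1 + monom 1 P) ^ b"
    by (simp add: power_add power_mult pow_onex[OF assms(1,2)])
  also have "coeff ([:1,1:] ^ a * (1 + monom 1 P :: 'k poly) ^ b) a
     = (\<Sum>l\<le>a. coeff ([:1,1:] ^ a) l * coeff ((1 + monom 1 P :: 'k poly) ^ b) (a - l))"
    by (rule coeff_mult)
  also have "\<dots> = (\<Sum>l\<in>{a}. coeff ([:1,1:] ^ a) l * coeff ((1 + monom 1 P :: 'k poly) ^ b) (a - l))"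
  proof (rule sum.mono_neutral_right)
    show "\<forall>l\<in>{..a} - {a}. coeff ([:1,1:] ^ a) l * coeff ((1 + monom 1 P :: 'k poly) ^ b) (a - l) = 0"
    proof
      fix l assume "l \<in> {..a} - {a}"
      hence "0 < a - l" "a - l < P" using assms by auto
      hence "\<not> P dvd (a - l)" using nat_dvd_not_less by blast
      thus "coeff ([:1,1:] ^ a) l * coeff ((1 + monom 1 P :: 'k poly) ^ b) (a - l) = 0"
        by (simp add: coeff_G[OF P0])
    qed
  qed auto
  also have "\<dots> = 1"
    using coeff_linear_poly_power[of a a "1::'k" 1] by (simp add: coeff_G[OF P0])
  finally show ?thesis .
qed

lemma conv_u_left:
  "conv (u p i) \<psi> n = (if p ^ i \<le> n then of_nat (n choose p ^ i) * \<psi> (n - p ^ i) else (0::'k::field))"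
proof -
  have "conv (u p i) \<psi> n = (\<Sum>l\<in>{..n}. if l = p ^ i then of_nat (n choose p ^ i) * \<psi> (n - p ^ i) else 0)"
    unfolding conv_def u_def by (rule sum.cong) auto
  also have "\<dots> = (if p ^ i \<le> n then of_nat (n choose p ^ i) * \<psi> (n - p ^ i) else 0)"
    by (subst sum.delta) auto
  finally show ?thesis .
qed

lemma gpow_u:
  assumes "prime CHAR('k::field)" "p = CHAR('k)"
  shows "gpow (u p i) j n = (if n = j * p ^ i then of_nat (fact j) else (0::'k))"
proof (induction j arbitrary: n)
  case 0
  then show ?case by (simp add: gunit_def)
next
  case (Suc j)
  have P0: "0 < p ^ i" using assms prime_gt_0_nat by simp
  show ?case
  proof (cases "n = Suc j * p ^ i")
    case True
    have "(of_nat (n choose p ^ i) :: 'k) = of_nat (Suc j)"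
      using binom1[OF assms(1), of "p ^ i" i "Suc j"] True assms(2) by simp
    moreover have "n - p ^ i = j * p ^ i" using True by simp
    ultimately show ?thesis using True Suc.IH by (simp add: conv_u_left algebra_simps)
  next
    case False
    have "\<not> (p ^ i \<le> n \<and> n - p ^ i = j * p ^ i)" using False by auto
    thus ?thesis using False Suc.IH by (auto simp add: conv_u_left)
  qed
qed

definition wsum :: "nat \<Rightarrow> nat \<Rightarrow> (nat \<Rightarrow> nat) \<Rightarrow> nat" where
  "wsum p r e = (\<Sum>i<r. e i * p ^ i)"

lemma wsum_less:
  assumes "0 < p" "\<forall>i<r. e i < p"
  shows "wsum p r e < p ^ r"
  using assms
proof (induction r)
  case 0 then show ?case by (simp add: wsum_def)
next
  case (Suc r)
  have "wsum p (Suc r) e = wsum p r e + e r * p ^ r" by (simp add: wsum_def)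
  also have "\<dots> < p ^ r + e r * p ^ r" using Suc by simp
  also have "\<dots> = (Suc (e r)) * p ^ r" by simp
  also have "\<dots> \<le> p * p ^ r" using Suc.prems by (intro mult_right_mono) auto
  finally show ?case by simp
qed

lemma umon_val:
  assumes "prime CHAR('k::field)" "p = CHAR('k)" "\<forall>i<r. e i < p"
  shows "umon p r e n = (if n = wsum p r e then of_nat (\<Prod>i<r. fact (e i)) else (0::'k))"
  using assms(3)
proof (induction r arbitrary: n)
  case 0
  then show ?case by (simp add: gunit_def wsum_def)
next
  case (Suc r)
  have p0: "0 < p" using assms prime_gt_0_nat by simp
  let ?W = "wsum p r e"
  have Wl: "?W < p ^ r" using wsum_less[OF p0] Suc.prems by simp
  have ws: "wsum p (Suc r) e = ?W + e r * p ^ r" by (simp add: wsum_def)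
  have "(umon p (Suc r) e n :: 'k) = (\<Sum>l\<le>n. of_nat (n choose l) * umon p r e l * gpow (u p r) (e r) (n - l))"
    by (simp add: conv_def)
  also have "\<dots> = (\<Sum>l\<in>{..n}. if l = ?W then of_nat (n choose ?W) * of_nat (\<Prod>i<r. fact (e i)) * gpow (u p r) (e r) (n - ?W) else 0)"
  proof (rule sum.cong[OF refl])
    fix l
    have IH: "\<And>l. umon p r e l = (if l = ?W then of_nat (\<Prod>i<r. fact (e i)) else (0::'k))"
      using Suc.IH Suc.prems by simp
    show "(of_nat (n choose l) :: 'k) * umon p r e l * gpow (u p r) (e r) (n - l) = (if l = ?W then of_nat (n choose ?W) * of_nat (\<Prod>i<r. fact (e i)) * gpow (u p r) (e r) (n - ?W) else 0)"
      by (simp add: IH)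
  qed
  also have "\<dots> = (if ?W \<le> n then of_nat (n choose ?W) * of_nat (\<Prod>i<r. fact (e i)) * gpow (u p r) (e r) (n - ?W) else 0)"
    by (subst sum.delta) auto
  also have "\<dots> = (if n = wsum p (Suc r) e then of_nat (\<Prod>i<Suc r. fact (e i)) else 0)"
  proof (cases "n = wsum p (Suc r) e")
    case True
    have "(of_nat (n choose ?W) :: 'k) = 1"
      using binom2[OF assms(1), of "p ^ r" r ?W "e r"] True ws Wl assms(2) by simp
    then show ?thesis using True ws by (simp add: gpow_u[OF assms(1,2)] mult.commute)
  next
    case False
    then show ?thesis using ws by (auto simp add: gpow_u[OF assms(1,2)])
  qed
  finally show ?case .
qed

lemma wsum_digits:
  assumes "0 < (p::nat)"
  shows "wsum p r (\<lambda>i. n div p ^ i mod p) = n mod p ^ r"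
proof (induction r)
  case 0 then show ?case by (simp add: wsum_def)
next
  case (Suc r)
  have "wsum p (Suc r) (\<lambda>i. n div p ^ i mod p) = n mod p ^ r + (n div p ^ r mod p) * p ^ r"
    using Suc by (simp add: wsum_def)
  also have "\<dots> = n mod (p ^ r * p)" by (simp add: mod_mult2_eq)
  finally show ?case by (simp add: mult.commute)
qed

lemma wsum_cong: "(\<forall>i<r. e i = e' i) \<Longrightarrow> wsum p r e = wsum p r e'"
  unfolding wsum_def by (intro sum.cong) auto

lemma wsum_inj:
  assumes "0 < p" "\<forall>i<r. e i < p" "\<forall>i<r. e' i < p" "wsum p r e = wsum p r e'" "i < r"
  shows "e i = e' i"
  using assms(2-5)
proof (induction r arbitrary: i)
  case 0 then show ?case by simp
next
  case (Suc r)
  have W: "wsum p r e < p ^ r" "wsum p r e' < p ^ r" using wsum_less[OF assms(1)] Suc.prems by auto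
  have eq: "wsum p r e + e r * p ^ r = wsum p r e' + e' r * p ^ r"
    using Suc.prems by (simp add: wsum_def)
  have pp: "0 < p ^ r" using assms(1) by simp
  have "(wsum p r e + e r * p ^ r) div p ^ r = e r" using W pp by simp
  moreover have "(wsum p r e' + e' r * p ^ r) div p ^ r = e' r" using W pp by simp
  ultimately have er: "e r = e' r" using eq by simp
  have "(wsum p r e + e r * p ^ r) mod p ^ r = wsum p r e" using W pp by simp
  moreover have "(wsum p r e' + e' r * p ^ r) mod p ^ r = wsum p r e'" using W pp by simp
  ultimately have "wsum p r e = wsum p r e'" using eq by simp
  then show ?case using Suc er by (cases "i = r") auto
qed

lemma linear_part_eval:
  fixes \<phi> :: "nat \<Rightarrow> 'k::field"
  assumes pr: "prime CHAR('k)" and pc: "p = CHAR('k)" and van: "\<forall>N. p ^ r \<le> N \<longrightarrow> \<phi> N = 0"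
  shows "linear_part p r \<phi> = (\<lambda>n. \<Sum>i<r. \<phi> (p ^ i) * u p i n)"
proof -
  have p1: "1 < p" using pr pc prime_gt_1_nat by simp
  hence p0: "0 < p" by simp
  define V where "V e = (of_nat (\<Prod>i<r. fact (e i)) :: 'k)" for e
  define dig where "dig n = (\<lambda>i. if i < r then n div p ^ i mod p else 0)" for n
  have Vnz: "V e \<noteq> 0" if "e \<in> exps p r" for e
  proof
    assume "V e = 0"
    hence "p dvd (\<Prod>i<r. fact (e i))" unfolding V_def using of_nat_eq_0_iff_char_dvd pc by blast
    then obtain i where "i < r" "p dvd fact (e i)" using prime_dvd_prod_iff[of "{..<r}" p] pr pc by auto
    hence "p \<le> e i" using prime_dvd_fact_iff pr pc by blast
    thus False using that \<open>i < r\<close> unfolding exps_def by auto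
  qed
  have um: "umon p r e n = (if n = wsum p r e then V e else 0)" if "e \<in> exps p r" for e n
    using umon_val[OF pr pc, of r e n] that unfolding exps_def V_def by auto
  have dig_in: "dig n \<in> exps p r" for n using p0 unfolding dig_def exps_def by auto
  have wdig: "wsum p r (dig n) = n mod p ^ r" for n
    using wsum_cong[of r "dig n" "\<lambda>i. n div p ^ i mod p" p] wsum_digits[OF p0, of r n]
    unfolding dig_def by simp
  have inj: "e = e'" if "e \<in> exps p r" "e' \<in> exps p r" "wsum p r e = wsum p r e'" for e e'
  proof
    fix i show "e i = e' i"
    proof (cases "i < r")
      case True thus ?thesis using wsum_inj[OF p0, of r e e' i] that unfolding exps_def by auto
    next
      case False thus ?thesis using that unfolding exps_def by auto
    qed
  qed
  have wl: "wsum p r e < p ^ r" if "e \<in> exps p r" for e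
    using wsum_less[OF p0] that unfolding exps_def by auto
  have fin: "finite (exps p r)"
  proof (rule finite_imageD)
    show "inj_on (wsum p r) (exps p r)" using inj by (auto intro: inj_onI)
    show "finite (wsum p r ` exps p r)" using wl by (auto intro: finite_subset[of _ "{..<p^r}"])
  qed
  have iff: "(n = wsum p r e) \<longleftrightarrow> (n < p ^ r \<and> e = dig n)" if "e \<in> exps p r" for e n
  proof
    assume n: "n = wsum p r e"
    hence "n < p ^ r" using wl that by simp
    moreover have "wsum p r (dig n) = wsum p r e" using wdig n \<open>n < p ^ r\<close> by simp
    ultimately show "n < p ^ r \<and> e = dig n" using inj[OF that dig_in] by auto
  next
    assume "n < p ^ r \<and> e = dig n"
    thus "n = wsum p r e" using wdig by simp
  qed
  have key: "(\<Sum>e\<in>exps p r. c e * umon p r e n) = (if n < p ^ r then c (dig n) * V (dig n) else 0)" for c n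
  proof -
    have "(\<Sum>e\<in>exps p r. c e * umon p r e n) =
      (\<Sum>e\<in>exps p r. if e = dig n then (if n < p ^ r then c e * V e else 0) else 0)"
      by (rule sum.cong[OF refl]) (auto simp: um iff)
    also have "\<dots> = (if n < p ^ r then c (dig n) * V (dig n) else 0)"
      using fin dig_in by (subst sum.delta) auto
    finally show ?thesis .
  qed
  define c0 where "c0 e = (if e \<in> exps p r then \<phi> (wsum p r e) / V e else 0)" for e
  let ?Q = "\<lambda>c. (\<forall>e. e \<notin> exps p r \<longrightarrow> c e = 0) \<and>
                      (\<forall>n. \<phi> n = (\<Sum>e\<in>exps p r. c e * umon p r e n))"
  have Qc0: "?Q c0"
  proof (intro conjI allI impI)
    fix e assume "e \<notin> exps p r" thus "c0 e = 0" by (simp add: c0_def)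
  next
    fix n
    show "\<phi> n = (\<Sum>e\<in>exps p r. c0 e * umon p r e n)"
      unfolding key using van dig_in Vnz wdig by (auto simp: c0_def)
  qed
  have uniq: "c = c0" if "?Q c" for c
  proof
    fix e show "c e = c0 e"
    proof (cases "e \<in> exps p r")
      case False thus ?thesis using that by (simp add: c0_def)
    next
      case True
      let ?n = "wsum p r e"
      have "?n < p ^ r" "dig ?n = e" using iff[OF True, of ?n] by auto
      hence "\<phi> ?n = c e * V e" using that key[of c ?n] by simp
      thus ?thesis using True Vnz[OF True] by (simp add: c0_def)
    qed
  qed
  have THE: "(THE c. ?Q c) = c0" using Qc0 uniq by (rule the_equality)
  have cu: "c0 (unitvec i) = \<phi> (p ^ i)" if "i < r" for i
  proof -
    have ue: "unitvec i \<in> exps p r" using that p1 by (auto simp: exps_def unitvec_def)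
    have "wsum p r (unitvec i) = (\<Sum>j\<in>{..<r}. if j = i then p ^ i else 0)"
      unfolding wsum_def unitvec_def by (rule sum.cong) auto
    hence w: "wsum p r (unitvec i) = p ^ i" using that by simp
    have "(\<Prod>j<r. fact (unitvec i j)) = (1::nat)"
      by (rule prod.neutral) (auto simp: unitvec_def)
    hence "V (unitvec i) = 1" by (simp add: V_def)
    thus ?thesis using ue w by (simp add: c0_def)
  qed
  show ?thesis
    unfolding linear_part_def Let_def THE
    by (rule ext, rule sum.cong) (auto simp: cu)
qed

lemma pcompose_monom1: "pcompose (monom 1 N) (q :: 'k::field poly) = q ^ N"
proof (induction N)
  case 0 then show ?case by (simp add: pcompose_1 monom_0 one_pCons)
next
  case (Suc N)
  have "monom (1::'k) (Suc N) = [:0,1:] * monom 1 N"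
    by (simp add: monom_Suc)
  then show ?case using Suc by (simp add: pcompose_mult pcompose_pCons)
qed

lemma lowcoeff:
  assumes "coeff (q :: 'k::field poly) 0 = 0"
  shows "k < N \<Longrightarrow> coeff (q ^ N) k = 0"
proof (induction N arbitrary: k)
  case 0 then show ?case by simp
next
  case (Suc N)
  have "coeff (q ^ Suc N) k = (\<Sum>j\<le>k. coeff q j * coeff (q ^ N) (k - j))"
    by (simp add: coeff_mult)
  also have "\<dots> = 0"
  proof (rule sum.neutral, rule ballI)
    fix j assume "j \<in> {..k}"
    show "coeff q j * coeff (q ^ N) (k - j) = 0"
    proof (cases "j = 0")
      case True thus ?thesis using assms by simp
    next
      case False thus ?thesis using Suc.IH[of "k - j"] Suc.prems \<open>j \<in> {..k}\<close> by simp
    qed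
  qed
  finally show ?case .
qed

lemma frob_sigma:
  assumes "prime CHAR('k::field)" "p = CHAR('k)"
  shows "(sigma p (b :: 'k list)) ^ (p ^ i) = (\<Sum>s<length b. monom ((b ! s) ^ (p ^ i)) (p ^ s * p ^ i))"
proof -
  have "(sigma p b) ^ (p ^ i) = (\<Sum>s<length b. (monom (b ! s) (p ^ s)) ^ (p ^ i))"
    unfolding sigma_def by (rule freshmans_dream_sum') (use assms in auto)
  thus ?thesis by (simp add: monom_power)
qed

lemma ulin_trunc:
  assumes "1 < p" "n < p ^ r"
  shows "ulin p L c n = ulin p (min L r) c (n::nat)"
  unfolding ulin_def
proof (rule sum.mono_neutral_right)
  show "\<forall>s\<in>{..<L} - {..<min L r}. c s * u p s n = 0"
  proof
    fix s assume "s \<in> {..<L} - {..<min L r}"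
    hence "r \<le> s" by auto
    hence "p ^ r \<le> p ^ s" using assms(1) by (simp add: power_increasing)
    thus "c s * u p s n = 0" using assms(2) by (simp add: u_def)
  qed
qed auto

lemma push_val:
  assumes "0 < r" "1 < p"
  shows "push_r p r q (u p (r - 1)) N = coeff (q ^ N) (p ^ (r - 1))"
proof -
  have lt: "p ^ (r - 1) < p ^ r" using assms by (simp add: power_strict_increasing)
  have "push_r p r q (u p (r - 1)) N = (\<Sum>n\<in>{..<p ^ r}. if n = p ^ (r - 1) then coeff (q ^ N) n else 0)"
    unfolding push_r_def u_def by (rule sum.cong) (auto simp: pcompose_monom1)
  also have "\<dots> = coeff (q ^ N) (p ^ (r - 1))" using lt by (subst sum.delta) auto
  finally show ?thesis .
qed

theorem proposition3p8:
  fixes scale :: "'k::field \<Rightarrow> 'm::ab_group_add \<Rightarrow> 'm"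
    and D :: "nat \<Rightarrow> 'm \<Rightarrow> 'm"
    and p r :: nat
    and a :: "'k list"
  assumes p_prime: "prime p"
    and char_p: "CHAR('k) = p"
    and alg_closed: "\<forall>f :: 'k poly. 0 < degree f \<longrightarrow> (\<exists>x. poly f x = 0)"
    and r_pos: "0 < r"
    and M: "Ga_module scale D"
    and deg: "degree_less D (p ^ r)"
  defines "b \<equiv> map (\<lambda>j. seq_nth a (r - 1 - j)) [0..<r]"
  shows "(\<forall>m. act scale D (ulin p (length a) (\<lambda>s. (a ! s) ^ (p ^ s))) m
              = act scale D (ulin p r (\<lambda>i. (b ! (r - 1 - i)) ^ (p ^ i))) m)
     \<and> linear_part p r (push_r p r (sigma p b) (u p (r - 1)))
         = ulin p r (\<lambda>i. (b ! (r - 1 - i)) ^ (p ^ i))"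
proof -
  have pr: "prime CHAR('k)" and pc: "p = CHAR('k)" using p_prime char_p by auto
  have p1: "1 < p" using p_prime prime_gt_1_nat by simp
  have lb: "length b = r" by (simp add: b_def)
  have bi: "b ! (r - 1 - i) = seq_nth a i" if "i < r" for i
    using that by (simp add: b_def)
  have bi': "b ! (r - Suc i) = seq_nth a i" if "i < r" for i
    using bi[OF that] by simp
  have ulin_eq: "ulin p (length a) (\<lambda>s. (a ! s) ^ (p ^ s)) n = ulin p r (\<lambda>i. (b ! (r - 1 - i)) ^ (p ^ i)) n"
    if n: "n < p ^ r" for n
  proof -
    let ?m = "min (length a) r"
    have "ulin p (length a) (\<lambda>s. (a ! s) ^ (p ^ s)) n = ulin p ?m (\<lambda>s. (a ! s) ^ (p ^ s)) n"
      by (rule ulin_trunc[OF p1 n])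
    also have "\<dots> = ulin p ?m (\<lambda>i. (b ! (r - 1 - i)) ^ (p ^ i)) n"
      unfolding ulin_def by (rule sum.cong) (auto simp: bi bi' seq_nth_def)
    also have "\<dots> = ulin p r (\<lambda>i. (b ! (r - 1 - i)) ^ (p ^ i)) n"
      unfolding ulin_def
    proof (rule sum.mono_neutral_left)
      show "\<forall>i\<in>{..<r} - {..<?m}. (b ! (r - 1 - i)) ^ (p ^ i) * u p i n = 0"
        using p1 by (auto simp: bi bi' seq_nth_def)
    qed auto
    finally show ?thesis .
  qed
  have part1: "\<forall>m. act scale D (ulin p (length a) (\<lambda>s. (a ! s) ^ (p ^ s))) m
              = act scale D (ulin p r (\<lambda>i. (b ! (r - 1 - i)) ^ (p ^ i))) m"
  proof
    fix m
    show "act scale D (ulin p (length a) (\<lambda>s. (a ! s) ^ (p ^ s))) m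
              = act scale D (ulin p r (\<lambda>i. (b ! (r - 1 - i)) ^ (p ^ i))) m"
      unfolding act_def
    proof (rule sum.cong[OF refl])
      fix n assume "n \<in> {n. D n m \<noteq> 0}"
      hence "n < p ^ r" using deg unfolding degree_less_def by (meson mem_Collect_eq not_le)
      thus "scale (ulin p (length a) (\<lambda>s. a ! s ^ p ^ s) n) (D n m) =
            scale (ulin p r (\<lambda>i. b ! (r - 1 - i) ^ p ^ i) n) (D n m)"
        using ulin_eq by simp
    qed
  qed
  let ?q = "sigma p b"
  have q0: "coeff ?q 0 = 0"
    using p1 by (simp add: sigma_def coeff_sum coeff_monom)
  have van: "\<forall>N. p ^ r \<le> N \<longrightarrow> push_r p r ?q (u p (r - 1)) N = 0"
  proof (intro allI impI)
    fix N assume "p ^ r \<le> N"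
    moreover have "p ^ (r - 1) < p ^ r" using r_pos p1 by (simp add: power_strict_increasing)
    ultimately show "push_r p r ?q (u p (r - 1)) N = 0"
    proof -
      have "push_r p r ?q (u p (r - 1)) N = coeff (?q ^ N) (p ^ (r - 1))"
        by (rule push_val[OF r_pos p1])
      also have "\<dots> = 0" using lowcoeff[OF q0] \<open>p ^ (r - 1) < p ^ r\<close> \<open>p ^ r \<le> N\<close> by simp
      finally show ?thesis .
    qed
  qed
  have phival: "push_r p r ?q (u p (r - 1)) (p ^ i) = (b ! (r - 1 - i)) ^ (p ^ i)" if "i < r" for i
  proof -
    have "push_r p r ?q (u p (r - 1)) (p ^ i) = coeff (?q ^ (p ^ i)) (p ^ (r - 1))"
      by (rule push_val[OF r_pos p1])
    also have "\<dots> = (\<Sum>s<r. if p ^ s * p ^ i = p ^ (r - 1) then (b ! s) ^ (p ^ i) else 0)"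
      by (simp add: frob_sigma[OF pr pc] lb coeff_sum coeff_monom)
    also have "\<dots> = (\<Sum>s\<in>{..<r}. if s = r - 1 - i then (b ! s) ^ (p ^ i) else 0)"
    proof (rule sum.cong[OF refl])
      fix s assume "s \<in> {..<r}"
      have "(p ^ s * p ^ i = p ^ (r - 1)) \<longleftrightarrow> (s + i = r - 1)"
        using p1 by (simp add: power_add[symmetric] power_inject_exp)
      also have "\<dots> \<longleftrightarrow> s = r - 1 - i" using that \<open>s \<in> {..<r}\<close> by auto
      finally show "(if p ^ s * p ^ i = p ^ (r - 1) then (b ! s) ^ (p ^ i) else 0) =
         (if s = r - 1 - i then (b ! s) ^ (p ^ i) else 0)" by simp
    qed
    also have "\<dots> = (b ! (r - 1 - i)) ^ (p ^ i)" using r_pos by (subst sum.delta) auto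
    finally show ?thesis .
  qed
  have phival': "push_r p r ?q (u p (r - Suc 0)) (p ^ i) = (b ! (r - Suc i)) ^ (p ^ i)" if "i < r" for i
    using phival[OF that] by simp
  have "linear_part p r (push_r p r ?q (u p (r - 1)))
      = (\<lambda>n. \<Sum>i<r. push_r p r ?q (u p (r - 1)) (p ^ i) * u p i n)"
    by (rule linear_part_eval[OF pr pc van])
  also have "\<dots> = ulin p r (\<lambda>i. (b ! (r - 1 - i)) ^ (p ^ i))"
    unfolding ulin_def by (rule ext, rule sum.cong) (auto simp: phival')
  finally show ?thesis using part1 by simp
qed

end
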